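(* Let $a(x)=1+x^i$ and $b(x)=x^j+x^{j+k}$ be two polynomials of weight two in $\mathbb{F}_2[x]/\langle x^n-1\rangle$. Then the girth $g(G)$ of the Tanner graph associated with the generalized bicycle code defined by $a(x)$ and $b(x)$ satisfies $g(G)\le 8$.
   Context: The Tanner graph of the GB code defined by $a(x)=\sum a_tx^t$, $b(x)=\sum b_tx^t$ is the bipartite graph with $n$ check nodes $x_0,\dots,x_{n-1}$ (X-checks) and $2n$ qubit nodes $q_0,\dots,q_{n-1},q'_0,\dots,q'_{n-1}$, where $x_t$ is adjacent to $q_c$ iff $a_{t-c}=1$ and to $q'_c$ iff $b_{t-c}=1$ (indices mod $n$). The girth is the length of a shortest cycle. *)

theory Defs
  imports "HOL-Computational_Algebra.Polynomial" "HOL-Library.Z2" "HOL-Library.Extended_Nat"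
begin

text \<open>The image of p in
  F2[x]/(x^n - 1) has t-th coefficient (0 <= t < n) equal to the sum of the
  coefficients of p at exponents congruent to t modulo n.\<close>

definition cyc_coeff :: "nat \<Rightarrow> bit poly \<Rightarrow> nat \<Rightarrow> bit" where
  "cyc_coeff n p t = (\<Sum>e\<in>{e. e \<le> degree p \<and> e mod n = t mod n}. coeff p e)"

definition cyc_weight :: "nat \<Rightarrow> bit poly \<Rightarrow> nat" where
  "cyc_weight n p = card {t. t < n \<and> cyc_coeff n p t \<noteq> 0}"

text \<open>Vertices of the Tanner graph: X-checks x_t, qubits q_c and q'_c.\<close>
datatype tvert = XC nat | QL nat | QR nat

definition gb_edge :: "nat \<Rightarrow> bit poly \<Rightarrow> bit poly \<Rightarrow> tvert \<Rightarrow> tvert \<Rightarrow> bool" where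
  "gb_edge n a b u v = (case (u, v) of
      (XC t, QL c) \<Rightarrow> t < n \<and> c < n \<and> cyc_coeff n a ((t + n - c) mod n) = 1
    | (XC t, QR c) \<Rightarrow> t < n \<and> c < n \<and> cyc_coeff n b ((t + n - c) mod n) = 1
    | _ \<Rightarrow> False)"

definition gb_adj :: "nat \<Rightarrow> bit poly \<Rightarrow> bit poly \<Rightarrow> tvert \<Rightarrow> tvert \<Rightarrow> bool" where
  "gb_adj n a b u v = (gb_edge n a b u v \<or> gb_edge n a b v u)"

definition gb_cycle :: "nat \<Rightarrow> bit poly \<Rightarrow> bit poly \<Rightarrow> tvert list \<Rightarrow> bool" where
  "gb_cycle n a b vs = (length vs \<ge> 3 \<and> distinct vs \<and>
     (\<forall>k < length vs. gb_adj n a b (vs ! k) (vs ! ((k + 1) mod length vs))))"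

text \<open>Girth: length of a shortest cycle (infinity if there is none).\<close>
definition gb_girth :: "nat \<Rightarrow> bit poly \<Rightarrow> bit poly \<Rightarrow> enat" where
  "gb_girth n a b = (INF vs \<in> {vs. gb_cycle n a b vs}. enat (length vs))"

end

theory Submission
  imports Defs
begin

lemma cc_bound:
  assumes "degree p \<le> D"
  shows "cyc_coeff n p t = (\<Sum>e\<in>{e. e \<le> D \<and> e mod n = t mod n}. coeff p e)"
  unfolding cyc_coeff_def
  by (rule sum.mono_neutral_left) (use assms in \<open>auto simp: coeff_eq_0 dest: le_degree\<close>)

lemma cc_add: "cyc_coeff n (p + q) t = cyc_coeff n p t + cyc_coeff n q t"
proof -
  let ?D = "max (degree p) (degree q)"
  have "degree (p + q) \<le> ?D" by (rule degree_add_le) auto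
  then show ?thesis
    unfolding cc_bound[OF \<open>degree (p + q) \<le> ?D\<close>]
       cc_bound[of p ?D, OF max.cobounded1] cc_bound[of q ?D, OF max.cobounded2]
    by (subst sum.distrib[symmetric]) (rule sum.cong, rule refl, rule coeff_add)
qed

lemma cc_monom: "cyc_coeff n (monom 1 u) t = (if u mod n = t mod n then 1 else 0)"
  by (subst cc_bound[of _ u]) (auto simp: coeff_monom degree_monom_le)

lemma cc_two: "cyc_coeff n (monom 1 u + monom 1 v) t =
   (if u mod n = t mod n then 1 else 0) + (if v mod n = t mod n then 1 else 0)"
  by (simp add: cc_add cc_monom)

lemma weight_two:
  assumes "cyc_weight n (monom 1 u + monom 1 v) = 2"
  shows "u mod n \<noteq> v mod n"
proof
  assume h: "u mod n = v mod n"
  have "\<And>t. cyc_coeff n (monom 1 u + monom 1 v) t = 0" by (simp add: cc_two h)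
  then have "cyc_weight n (monom 1 u + monom 1 v) = 0" by (simp add: cyc_weight_def)
  with assms show False by simp
qed

lemma m0: "monom (1::bit) 0 = 1" by (simp add: monom_0 one_pCons)

definition X :: "nat \<Rightarrow> int \<Rightarrow> tvert" where "X n e = XC (nat (e mod int n))"
definition QLv :: "nat \<Rightarrow> int \<Rightarrow> tvert" where "QLv n e = QL (nat (e mod int n))"
definition QRv :: "nat \<Rightarrow> int \<Rightarrow> tvert" where "QRv n e = QR (nat (e mod int n))"

lemma key:
  assumes "n > 0" "t = nat (e1 mod int n)" "c = nat (e2 mod int n)"
  shows "(u mod n = (t+n-c) mod n) \<longleftrightarrow> (int u mod int n = (e1 - e2) mod int n)"
proof -
  have c: "c < n" "t < n" using assms by (auto simp: nat_less_iff)
  have "int ((t+n-c) mod n) = (e1 mod int n + int n - e2 mod int n) mod int n"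
    using c assms by (simp add: zmod_int of_nat_diff)
  also have "\<dots> = (e1 - e2) mod int n"
    by (metis add.commute diff_add_eq mod_add_self2 mod_diff_eq)
  finally have e: "int ((t+n-c) mod n) = (e1 - e2) mod int n" .
  have "(u mod n = (t+n-c) mod n) \<longleftrightarrow> int (u mod n) = int ((t+n-c) mod n)" by simp
  also have "\<dots> \<longleftrightarrow> int u mod int n = (e1 - e2) mod int n" using e by (simp add: zmod_int)
  finally show ?thesis .
qed

lemma bit_one: "(if P then 1 else 0) + (if Q then 1 else 0) = (1::bit)" if "P \<noteq> Q"
  using that by auto

lemma adjL:
  assumes "n > 0" "(int u mod int n = (e1 - e2) mod int n) \<noteq> (int v mod int n = (e1 - e2) mod int n)"
  shows "gb_adj n (monom 1 u + monom 1 v) b (X n e1) (QLv n e2)"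
    "gb_adj n (monom 1 u + monom 1 v) b (QLv n e2) (X n e1)"
proof -
  have lt: "nat (e1 mod int n) < n" "nat (e2 mod int n) < n" using assms(1) by (auto simp: nat_less_iff)
  have "cyc_coeff n (monom 1 u + monom 1 v) ((nat (e1 mod int n) + n - nat (e2 mod int n)) mod n) = 1"
    unfolding cc_two mod_mod_trivial key[OF assms(1) refl refl] using assms(2) by (rule bit_one)
  then show "gb_adj n (monom 1 u + monom 1 v) b (X n e1) (QLv n e2)"
    "gb_adj n (monom 1 u + monom 1 v) b (QLv n e2) (X n e1)"
    using lt unfolding gb_adj_def gb_edge_def X_def QLv_def by auto
qed

lemma adjR:
  assumes "n > 0" "(int u mod int n = (e1 - e2) mod int n) \<noteq> (int v mod int n = (e1 - e2) mod int n)"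
  shows "gb_adj n a (monom 1 u + monom 1 v) (X n e1) (QRv n e2)"
    "gb_adj n a (monom 1 u + monom 1 v) (QRv n e2) (X n e1)"
proof -
  have lt: "nat (e1 mod int n) < n" "nat (e2 mod int n) < n" using assms(1) by (auto simp: nat_less_iff)
  have "cyc_coeff n (monom 1 u + monom 1 v) ((nat (e1 mod int n) + n - nat (e2 mod int n)) mod n) = 1"
    unfolding cc_two mod_mod_trivial key[OF assms(1) refl refl] using assms(2) by (rule bit_one)
  then show "gb_adj n a (monom 1 u + monom 1 v) (X n e1) (QRv n e2)"
    "gb_adj n a (monom 1 u + monom 1 v) (QRv n e2) (X n e1)"
    using lt unfolding gb_adj_def gb_edge_def X_def QRv_def by auto
qed


lemma girth_le: "gb_cycle n a b vs \<Longrightarrow> length vs \<le> 8 \<Longrightarrow> gb_girth n a b \<le> 8"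
  unfolding gb_girth_def
  by (rule order.trans[OF INF_lower[of vs]]) (auto simp: numeral_eq_enat)

lemma k8: "(k::nat) < 8 \<Longrightarrow> k = 0 \<or> k = 1 \<or> k = 2 \<or> k = 3 \<or> k = 4 \<or> k = 5 \<or> k = 6 \<or> k = 7"
  by arith

lemma k4: "(k::nat) < 4 \<Longrightarrow> k = 0 \<or> k = 1 \<or> k = 2 \<or> k = 3"
  by arith

lemma Xeq: "n > 0 \<Longrightarrow> X n e1 = X n e2 \<longleftrightarrow> e1 mod int n = e2 mod int n"
  unfolding X_def by (simp add: eq_nat_nat_iff)
lemma QLeq: "n > 0 \<Longrightarrow> QLv n e1 = QLv n e2 \<longleftrightarrow> e1 mod int n = e2 mod int n"
  unfolding QLv_def by (simp add: eq_nat_nat_iff)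
lemma QReq: "n > 0 \<Longrightarrow> QRv n e1 = QRv n e2 \<longleftrightarrow> e1 mod int n = e2 mod int n"
  unfolding QRv_def by (simp add: eq_nat_nat_iff)
lemma diffs[simp]: "X n e1 \<noteq> QLv n e2" "X n e1 \<noteq> QRv n e2" "QLv n e1 \<noteq> QRv n e2"
  "QLv n e2 \<noteq> X n e1" "QRv n e2 \<noteq> X n e1" "QRv n e1 \<noteq> QLv n e2"
  unfolding X_def QLv_def QRv_def by auto

theorem lemma4:
  fixes n i j k :: nat and a b :: "bit poly"
  assumes "n > 0"
    and "a = 1 + monom 1 i"
    and "b = monom 1 j + monom 1 (j + k)"
    and "cyc_weight n a = 2"
    and "cyc_weight n b = 2"
  shows "gb_girth n a b \<le> 8"
proof -
  have a: "a = monom 1 0 + monom 1 i" using assms(2) m0 by simp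
  have "0 mod n \<noteq> i mod n" using weight_two assms(4) a by metis
  then have hA: "0 \<noteq> int i mod int n" by (metis mod_0 of_nat_0 of_nat_eq_iff zmod_int)
  have "j mod n \<noteq> (j + k) mod n" using weight_two assms(5) assms(3) by metis
  then have hB: "int j mod int n \<noteq> int (j + k) mod int n" by (metis of_nat_eq_iff zmod_int)
  define I where "I = int i"
  define J where "J = int j"
  define K where "K = int k"
  have ij: "int i = I" "int j = J" "int k = K" using I_def J_def K_def by simp_all
  have np: "n > 0" by fact
  note adjs = adjL[OF np] adjR[OF np] adjL[OF np, where u=0, unfolded m0]
  have hA': "I mod int n \<noteq> 0" using hA ij by simp
  have hB': "J mod int n \<noteq> (J + K) mod int n" "(J + K) mod int n \<noteq> J mod int n" using hB ij by simp_all
  have ab: "a = monom 1 0 + monom 1 i" "b = monom 1 j + monom 1 (j + k)"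
    using a assms(3) by simp_all
  consider (c1) "I mod n = K mod n" | (c2) "(I + K) mod n = 0" | (c3) "I mod n \<noteq> K mod n" "(I + K) mod n \<noteq> 0"
    by blast
  then show ?thesis
  proof cases
    case c1
    let ?vs = "[X n 0, QLv n 0, X n I, QRv n (-J)]"
    have "gb_cycle n a b ?vs"
      unfolding gb_cycle_def
    proof (intro conjI allI impI)
      show "distinct ?vs" using hA' by (simp add: Xeq[OF np])
      have e: "(I + J) mod n = (J + K) mod n" using c1
        by (metis add.commute mod_add_left_eq)
      fix m assume "m < length ?vs"
      then show "gb_adj n a b (?vs ! m) (?vs ! ((m + 1) mod length ?vs))"
        using k4[of m] unfolding ab 
        by (auto intro!: adjs simp: ij hA' hB' e)
    qed simp
    then show ?thesis by (rule girth_le) simp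
  next
    case c2
    let ?vs = "[X n 0, QLv n 0, X n I, QRv n (I - J)]"
    have "gb_cycle n a b ?vs"
      unfolding gb_cycle_def
    proof (intro conjI allI impI)
      show "distinct ?vs" using hA' by (simp add: Xeq[OF np])
      have e: "(J - I) mod n = (J + K) mod n" using c2
        by (metis add.commute add_diff_cancel_right' diff_diff_eq2 mod_diff_left_eq minus_diff_eq mod_0 diff_0 mod_diff_eq)
      fix m assume "m < length ?vs"
      then show "gb_adj n a b (?vs ! m) (?vs ! ((m + 1) mod length ?vs))"
        using k4[of m] unfolding ab 
        by (auto intro!: adjs simp: ij hA' hB' e)
    qed simp
    then show ?thesis by (rule girth_le) simp
  next
    case c3
    let ?vs = "[X n 0, QLv n 0, X n I, QRv n (I - J), X n (I + K), QLv n K, X n K, QRv n (- J)]"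
    have hK: "K mod int n \<noteq> 0" using hB' by auto
    have f1: "(I + K) mod int n \<noteq> I mod int n" "(I + K) mod int n \<noteq> K mod int n"
      "(I - J) mod int n \<noteq> (- J) mod int n"
      using hK hA' by (simp_all add: mod_eq_dvd_iff mod_eq_0_iff_dvd)
    have "gb_cycle n a b ?vs"
      unfolding gb_cycle_def
    proof (intro conjI allI impI)
      show "distinct ?vs" using hA' hK f1 c3 by (auto simp add: Xeq[OF np] QLeq[OF np] QReq[OF np])
      have e: "(K + J) mod n = (J + K) mod n" by (simp add: add.commute)
      fix m assume "m < length ?vs"
      then show "gb_adj n a b (?vs ! m) (?vs ! ((m + 1) mod length ?vs))"
        using k8[of m] unfolding ab 
        by (auto intro!: adjs simp: ij hA' hB' e)
    qed simp
    then show ?thesis by (rule girth_le) simp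
  qed
qed

end
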